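(* Let $(\Delta,U,\mu_\Delta)$ be an expanding Young tower with $\mu_\Delta(\Delta_n)\le C\rho^n$, $\rho<1$, let $\tau<1$ and let $\epsilon>0$ with $e^{\epsilon}\rho<1$. There exist $C>0$ and $\theta<1$ such that for all $n\in\mathbb N$, $$\int_{U^{-n}\Delta_0}\tau^{\Psi_n}e^{\epsilon\omega}\,d\mu_\Delta\le C\theta^n.$$
   Context: Expanding Young tower: probability space $(\Delta,\mu_\Delta)$, measure-preserving $U$, partition $\{\Delta_{k,p}\}_{0\le k<r_p}$ with $U:\Delta_{k,p}\to\Delta_{k+1,p}$ and $U:\Delta_{r_p-1,p}\to\Delta_0=\bigcup_m\Delta_{0,m}$ measurable isomorphisms, and bounded distortion $|1-J(x)/J(y)|\le C\beta^{s(Ux,Uy)}$ for the inverse Jacobian $J$ and $x,y$ in a common partition element ($s$ the separation time counted in returns to the basis). $\Delta_n=\bigcup_p\Delta_{n,p}$; $\omega(x)=n$ for $x\in\Delta_n$ (height); $\Psi_n(x)=\#\{1\le k\le n:U^kx\in\Delta_0\}$. *)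

theory Defs
  imports "HOL-Probability.Probability"
begin

text \<open>Tower data: index set I of base partition elements, heights r p, floors D k p
  (the set Delta_{k,p}, for p in I and k < r p).\<close>

definition tower_base :: "nat set \<Rightarrow> (nat \<Rightarrow> nat \<Rightarrow> 'a set) \<Rightarrow> 'a set" where
  "tower_base I D = (\<Union>p\<in>I. D 0 p)"

definition tower_level :: "nat set \<Rightarrow> (nat \<Rightarrow> nat) \<Rightarrow> (nat \<Rightarrow> nat \<Rightarrow> 'a set) \<Rightarrow> nat \<Rightarrow> 'a set" where
  "tower_level I r D n = (\<Union>p\<in>{p\<in>I. n < r p}. D n p)"

definition tower_height :: "nat set \<Rightarrow> (nat \<Rightarrow> nat) \<Rightarrow> (nat \<Rightarrow> nat \<Rightarrow> 'a set) \<Rightarrow> 'a \<Rightarrow> nat" where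
  "tower_height I r D x = (THE n. x \<in> tower_level I r D n)"

definition returns :: "('a \<Rightarrow> 'a) \<Rightarrow> 'a set \<Rightarrow> nat \<Rightarrow> 'a \<Rightarrow> nat" where
  "returns U B n x = card {k \<in> {1..n}. (U ^^ k) x \<in> B}"

definition same_elt :: "nat set \<Rightarrow> (nat \<Rightarrow> nat) \<Rightarrow> (nat \<Rightarrow> nat \<Rightarrow> 'a set) \<Rightarrow> 'a \<Rightarrow> 'a \<Rightarrow> bool" where
  "same_elt I r D x y = (\<exists>p\<in>I. \<exists>k<r p. x \<in> D k p \<and> y \<in> D k p)"

definition sep_time :: "nat set \<Rightarrow> (nat \<Rightarrow> nat) \<Rightarrow> (nat \<Rightarrow> nat \<Rightarrow> 'a set) \<Rightarrow> ('a \<Rightarrow> 'a) \<Rightarrow> 'a \<Rightarrow> 'a \<Rightarrow> enat" where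
  "sep_time I r D U x y =
     (if \<exists>j. \<not> same_elt I r D ((U ^^ j) x) ((U ^^ j) y)
      then enat (returns U (tower_base I D) (LEAST j. \<not> same_elt I r D ((U ^^ j) x) ((U ^^ j) y)) x)
      else \<infinity>)"

definition expanding_young_tower ::
  "'a measure \<Rightarrow> ('a \<Rightarrow> 'a) \<Rightarrow> nat set \<Rightarrow> (nat \<Rightarrow> nat) \<Rightarrow> (nat \<Rightarrow> nat \<Rightarrow> 'a set) \<Rightarrow> bool" where
  "expanding_young_tower M U I r D \<longleftrightarrow>
     prob_space M \<and>
     U \<in> M \<rightarrow>\<^sub>M M \<and> distr M M U = M \<and>
     (\<forall>p\<in>I. 1 \<le> r p) \<and>
     (\<forall>p\<in>I. \<forall>k<r p. D k p \<in> sets M) \<and>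
     (\<forall>p\<in>I. \<forall>q\<in>I. \<forall>k<r p. \<forall>l<r q. (k, p) \<noteq> (l, q) \<longrightarrow> D k p \<inter> D l q = {}) \<and>
     (\<Union>p\<in>I. \<Union>k\<in>{..<r p}. D k p) = space M \<and>
     (\<forall>p\<in>I. \<forall>k. Suc k < r p \<longrightarrow> bij_betw U (D k p) (D (Suc k) p)) \<and>
     (\<forall>p\<in>I. bij_betw U (D (r p - 1) p) (tower_base I D)) \<and>
     (\<forall>p\<in>I. \<forall>k<r p. \<forall>A. A \<in> sets M \<and> A \<subseteq> D k p \<longrightarrow> U ` A \<in> sets M) \<and>
     (\<exists>J :: 'a \<Rightarrow> real.
        J \<in> borel_measurable M \<and> (\<forall>x\<in>space M. 0 < J x) \<and>
        (\<forall>p\<in>I. \<forall>k<r p. \<forall>A. A \<in> sets M \<and> A \<subseteq> D k p \<longrightarrow>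
            emeasure M (U ` A) = (\<integral>\<^sup>+x\<in>A. ennreal (1 / J x) \<partial>M)) \<and>
        (\<exists>C \<beta> :: real. 0 < \<beta> \<and> \<beta> < 1 \<and>
           (\<forall>x\<in>space M. \<forall>y\<in>space M. same_elt I r D x y \<longrightarrow>
              (case sep_time I r D U (U x) (U y) of
                 enat m \<Rightarrow> \<bar>1 - J x / J y\<bar> \<le> C * \<beta> ^ m
               | \<infinity> \<Rightarrow> J x = J y))))"

end

theory Submission
  imports Defs
begin


locale tw =
  fixes M :: "'a measure" and U :: "'a \<Rightarrow> 'a" and I :: "nat set"
    and r :: "nat \<Rightarrow> nat" and D :: "nat \<Rightarrow> nat \<Rightarrow> 'a set"
    and J :: "'a \<Rightarrow> real" and K :: real
  assumes ps: "prob_space M"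
    and Umeas: "U \<in> M \<rightarrow>\<^sub>M M" and pres: "distr M M U = M"
    and rpos: "\<And>p. p\<in>I \<Longrightarrow> 1 \<le> r p"
    and Dsets: "\<And>p k. p\<in>I \<Longrightarrow> k<r p \<Longrightarrow> D k p \<in> sets M"
    and disj: "\<And>p q k l. p\<in>I \<Longrightarrow> q\<in>I \<Longrightarrow> k<r p \<Longrightarrow> l<r q \<Longrightarrow> (k, p) \<noteq> (l, q) \<Longrightarrow> D k p \<inter> D l q = {}"
    and cover: "(\<Union>p\<in>I. \<Union>k\<in>{..<r p}. D k p) = space M"
    and bstep: "\<And>p k. p\<in>I \<Longrightarrow> Suc k < r p \<Longrightarrow> bij_betw U (D k p) (D (Suc k) p)"
    and btop: "\<And>p. p\<in>I \<Longrightarrow> bij_betw U (D (r p - 1) p) (tower_base I D)"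
    and imgs: "\<And>p k A. p\<in>I \<Longrightarrow> k<r p \<Longrightarrow> A \<in> sets M \<Longrightarrow> A \<subseteq> D k p \<Longrightarrow> U ` A \<in> sets M"
    and Jmeas: "J \<in> borel_measurable M" and Jpos: "\<And>x. x\<in>space M \<Longrightarrow> 0 < J x"
    and jac: "\<And>p k A. p\<in>I \<Longrightarrow> k<r p \<Longrightarrow> A \<in> sets M \<Longrightarrow> A \<subseteq> D k p \<Longrightarrow>
            emeasure M (U ` A) = (\<integral>\<^sup>+x\<in>A. ennreal (1 / J x) \<partial>M)"
    and Kge: "1 \<le> K"
    and Kratio: "\<And>x y. x\<in>space M \<Longrightarrow> y\<in>space M \<Longrightarrow> same_elt I r D x y \<Longrightarrow> J x \<le> K * J y"
begin

abbreviation "B \<equiv> tower_base I D"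
definition "Lv k = tower_level I r D k"
definition "E k j = (\<Union>p\<in>{p\<in>I. r p = k + j}. D k p)"
definition "Top h = (\<Union>p\<in>{p\<in>I. r p = h}. D (h - 1) p)"
definition "G lam n x = ennreal (lam ^ returns U B n x) * indicator B ((U ^^ n) x)"

lemma Dsub: "p\<in>I \<Longrightarrow> k<r p \<Longrightarrow> D k p \<subseteq> space M"
  using cover by blast

lemma disj_pt: "p\<in>I \<Longrightarrow> q\<in>I \<Longrightarrow> k<r p \<Longrightarrow> l<r q \<Longrightarrow> x \<in> D k p \<Longrightarrow> x \<in> D l q \<Longrightarrow> k = l \<and> p = q"
  using disj by blast

lemma cover_pt: "x \<in> space M \<Longrightarrow> \<exists>p\<in>I. \<exists>k<r p. x \<in> D k p"
  using cover by blast

lemma iter: "p\<in>I \<Longrightarrow> k + i < r p \<Longrightarrow> x \<in> D k p \<Longrightarrow> (U ^^ i) x \<in> D (k + i) p"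
proof (induction i)
  case 0 then show ?case by simp
next
  case (Suc i)
  then have "(U ^^ i) x \<in> D (k + i) p" by simp
  moreover have "bij_betw U (D (k+i) p) (D (Suc (k+i)) p)" using Suc by (intro bstep) auto
  ultimately show ?case by (auto dest: bij_betwE)
qed

lemma ret: "p\<in>I \<Longrightarrow> k < r p \<Longrightarrow> x \<in> D k p \<Longrightarrow> (U ^^ (r p - k)) x \<in> B"
proof -
  assume a: "p\<in>I" "k < r p" "x \<in> D k p"
  have "(U ^^ (r p - 1 - k)) x \<in> D (k + (r p - 1 - k)) p" using a by (intro iter) auto
  then have "(U ^^ (r p - 1 - k)) x \<in> D (r p - 1) p" using a by (simp add: algebra_simps)
  then have "U ((U ^^ (r p - 1 - k)) x) \<in> B" using btop[OF a(1)] by (auto dest: bij_betwE)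
  moreover have "r p - k = Suc (r p - 1 - k)" using a by simp
  ultimately show ?thesis by simp
qed

lemma notB: "p\<in>I \<Longrightarrow> 1 \<le> k \<Longrightarrow> k < r p \<Longrightarrow> x \<in> D k p \<Longrightarrow> x \<notin> B"
  unfolding tower_base_def using disj_pt rpos
  by (metis UN_E less_le_trans not_one_le_zero zero_less_one)

lemma funpow_split: "j \<le> i \<Longrightarrow> (U ^^ i) x = (U ^^ (i - j)) ((U ^^ j) x)"
  by (metis funpow_add comp_apply le_add_diff_inverse2)

lemma returns_dec:
  assumes "p\<in>I" "k < r p" "x \<in> D k p" "r p - k \<le> n"
  shows "returns U B n x = Suc (returns U B (n - (r p - k)) ((U ^^ (r p - k)) x))"
proof -
  define j where "j = r p - k"
  have j1: "1 \<le> j" using assms unfolding j_def by simp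
  have nb: "(U ^^ i) x \<notin> B" if "1 \<le> i" "i < j" for i
    using iter[OF assms(1) _ assms(3), of i] notB[OF assms(1), of "k+i"] that unfolding j_def by auto
  have eq: "{i \<in> {1..n}. (U ^^ i) x \<in> B} = insert j ((\<lambda>i. i + j) ` {i \<in> {1..n - j}. (U ^^ i) ((U ^^ j) x) \<in> B})"
  proof (intro set_eqI iffI)
    fix i assume i: "i \<in> {i \<in> {1..n}. (U ^^ i) x \<in> B}"
    show "i \<in> insert j ((\<lambda>i. i + j) ` {i \<in> {1..n - j}. (U ^^ i) ((U ^^ j) x) \<in> B})"
    proof (cases "i = j")
      case False
      then have "j < i" using nb i by force
      then have "i = (i - j) + j" "(U ^^ (i - j)) ((U ^^ j) x) = (U ^^ i) x"
        using funpow_split[of j i x] by simp_all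
      then show ?thesis using i \<open>j < i\<close> by (intro insertI2 image_eqI[of _ _ "i - j"]) auto
    qed simp
  next
    fix i assume i: "i \<in> insert j ((\<lambda>i. i + j) ` {i \<in> {1..n - j}. (U ^^ i) ((U ^^ j) x) \<in> B})"
    then show "i \<in> {i \<in> {1..n}. (U ^^ i) x \<in> B}"
    proof
      assume "i = j" then show ?thesis using j1 assms ret unfolding j_def by auto
    next
      assume "i \<in> (\<lambda>i. i + j) ` {i \<in> {1..n - j}. (U ^^ i) ((U ^^ j) x) \<in> B}"
      then obtain i' where "i = i' + j" "i' \<in> {1..n-j}" "(U ^^ i') ((U ^^ j) x) \<in> B" by auto
      then show ?thesis using funpow_split[of j "i' + j" x] j1 by auto
    qed
  qed
  have "j \<notin> (\<lambda>i. i + j) ` {i \<in> {1..n - j}. (U ^^ i) ((U ^^ j) x) \<in> B}" by auto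
  then show ?thesis unfolding returns_def eq j_def[symmetric]
    by (subst card_insert_disjoint) (auto simp: card_image inj_on_def)
qed

lemma height: "p\<in>I \<Longrightarrow> k < r p \<Longrightarrow> x \<in> D k p \<Longrightarrow> tower_height I r D x = k"
  unfolding tower_height_def
proof (rule the_equality)
  assume a: "p\<in>I" "k < r p" "x \<in> D k p"
  then show "x \<in> tower_level I r D k" unfolding tower_level_def by blast
  fix m assume "x \<in> tower_level I r D m"
  then obtain q where "q \<in> I" "m < r q" "x \<in> D m q" unfolding tower_level_def by blast
  then show "m = k" using disj_pt[OF a(1) _ a(2)] a(3) by blast
qed

lemma B_eq: "B = Lv 0"
proof -
  have "{p\<in>I. 0 < r p} = I" using rpos by (auto simp: Suc_le_eq)
  then show ?thesis unfolding Lv_def tower_base_def tower_level_def by simp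
qed

lemma Dsets_top: "p\<in>I \<Longrightarrow> D (r p - 1) p \<in> sets M"
  using Dsets rpos by (simp add: Suc_le_eq)

lemma countable_nat: "countable (X :: nat set)" by simp

lemma Lv_sets: "Lv k \<in> sets M"
  unfolding Lv_def tower_level_def using Dsets by (intro sets.countable_UN') auto

lemma B_sets: "B \<in> sets M"
  unfolding B_eq Lv_sets by (rule Lv_sets)

lemma E_sets: "1 \<le> j \<Longrightarrow> E k j \<in> sets M"
  unfolding E_def using Dsets by (intro sets.countable_UN') auto

lemma Top_sets: "Top h \<in> sets M"
  unfolding Top_def using Dsets_top by (intro sets.countable_UN') auto

lemma Top_sub: "Top h \<subseteq> Lv (h - 1)"
  unfolding Top_def Lv_def tower_level_def using rpos by force

lemma Upow_meas: "U ^^ n \<in> M \<rightarrow>\<^sub>M M"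
proof (induction n)
  case (Suc n) then show ?case using measurable_comp[OF Suc.IH Umeas] by (simp add: comp_def)
qed (simp add: measurable_ident)

lemma pres_pow: "S \<in> sets M \<Longrightarrow> emeasure M ((U ^^ n) -` S \<inter> space M) = emeasure M S"
proof (induction n arbitrary: S)
  case 0 then show ?case using sets.sets_into_space by (simp add: Int_absorb2)
next
  case (Suc n)
  have "emeasure M ((U ^^ Suc n) -` S \<inter> space M) = emeasure M ((U ^^ n) -` (U -` S \<inter> space M) \<inter> space M)"
    by (rule arg_cong[where f="emeasure M"]) (use measurable_space[OF Upow_meas[of n]] in auto)
  also have "\<dots> = emeasure M (U -` S \<inter> space M)"
    using Suc.prems Umeas by (intro Suc.IH) (simp add: measurable_sets)
  also have "\<dots> = emeasure M S"
    using emeasure_distr[OF Umeas Suc.prems] pres by simp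
  finally show ?case .
qed

lemma pow_returns: "lam ^ returns U B n x = (\<Prod>i\<in>{1..n}. if (U ^^ i) x \<in> B then lam else 1)"
proof -
  have "{k \<in> {1..n}. (U ^^ k) x \<in> B} = {1..n} \<inter> {i. (U ^^ i) x \<in> B}" by auto
  then show ?thesis unfolding returns_def by (simp add: prod.If_cases)
qed

lemma G_meas: "G lam n \<in> borel_measurable M"
proof -
  have "(\<lambda>x. indicator B ((U ^^ i) x) :: real) \<in> borel_measurable M" for i
    by (rule measurable_compose[OF Upow_meas]) (rule borel_measurable_indicator, rule B_sets)
  then have "(\<lambda>x. (\<Prod>i\<in>{1..n}. if (U ^^ i) x \<in> B then lam else 1)) \<in> borel_measurable M"
  proof -
    assume h: "\<And>i. (\<lambda>x. indicator B ((U ^^ i) x) :: real) \<in> borel_measurable M"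
    have "\<And>i. (\<lambda>x. if (U ^^ i) x \<in> B then lam else 1) = (\<lambda>x. 1 + (lam - 1) * indicator B ((U ^^ i) x))"
      by (auto simp: indicator_def)
    then show ?thesis using h by (simp, intro borel_measurable_prod) auto
  qed
  moreover have "(\<lambda>x. indicator B ((U ^^ n) x) :: ennreal) \<in> borel_measurable M"
    by (rule measurable_compose[OF Upow_meas]) (rule borel_measurable_indicator, rule B_sets)
  ultimately show ?thesis unfolding G_def pow_returns by measurable
qed

end


context tw begin

lemma fin: "finite_measure M" using ps prob_space_def by blast

lemma emeq: "emeasure M S = ennreal (measure M S)"
  using fin finite_measure.emeasure_eq_measure by blast

lemma ennreal_mult_le: "0 \<le> a \<Longrightarrow> 0 \<le> b \<Longrightarrow> 0 \<le> d \<Longrightarrow> ennreal a * ennreal b \<le> ennreal d \<Longrightarrow> a * b \<le> d"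
  by (simp add: ennreal_mult[symmetric])

lemma dist_real:
  assumes p: "p\<in>I" and A: "A \<in> sets M" "A \<subseteq> D (r p - 1) p"
  shows "measure M A * measure M B \<le> K^2 * measure M (D (r p - 1) p) * measure M (U ` A)"
proof (cases "D (r p - 1) p = {}")
  case True then show ?thesis using A by simp
next
  case False
  define T where "T = D (r p - 1) p"
  have rp: "r p - 1 < r p" using rpos[OF p] by simp
  obtain y0 where y0: "y0 \<in> T" using False T_def by blast
  have Tsp: "T \<subseteq> space M" using Dsub[OF p rp] T_def by simp
  have Tsets: "T \<in> sets M" using Dsets[OF p rp] T_def by simp
  define c where "c = 1 / J y0"
  have Jy0: "0 < J y0" using Jpos y0 Tsp by auto
  have c0: "0 < c" using Jy0 c_def by simp
  have K0: "0 < K" using Kge by simp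
  have lo: "c / K \<le> 1 / J x" and hi: "1 / J x \<le> K * c" if x: "x \<in> T" for x
  proof -
    have same1: "same_elt I r D x y0" "same_elt I r D y0 x"
      unfolding same_elt_def using x y0 p rp T_def by blast+
    have Jx: "0 < J x" using Jpos x Tsp by auto
    have "J x \<le> K * J y0" using Kratio[OF _ _ same1(1)] x y0 Tsp by auto
    then show "c / K \<le> 1 / J x" using Jx Jy0 K0 unfolding c_def by (simp add: field_simps)
    have "J y0 \<le> K * J x" using Kratio[OF _ _ same1(2)] x y0 Tsp by auto
    then show "1 / J x \<le> K * c" using Jx Jy0 K0 unfolding c_def by (simp add: field_simps)
  qed
  have "emeasure M (U ` A) = (\<integral>\<^sup>+x\<in>A. ennreal (1 / J x) \<partial>M)"
    using jac[OF p rp A] T_def by simp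
  also have "\<dots> \<ge> (\<integral>\<^sup>+x\<in>A. ennreal (c / K) \<partial>M)"
    using lo A T_def by (intro nn_integral_mono) (auto simp: indicator_def intro!: ennreal_leI)
  finally have "ennreal (c / K) * emeasure M A \<le> emeasure M (U ` A)"
    using A by (simp add: nn_integral_cmult_indicator)
  then have 1: "c / K * measure M A \<le> measure M (U ` A)"
    using c0 K0 by (intro ennreal_mult_le) (simp_all add: emeq)
  have UT: "U ` T = B" using btop[OF p] T_def by (simp add: bij_betw_def)
  have "emeasure M B = (\<integral>\<^sup>+x\<in>T. ennreal (1 / J x) \<partial>M)"
    using jac[OF p rp Tsets] T_def UT by simp
  also have "\<dots> \<le> (\<integral>\<^sup>+x\<in>T. ennreal (K * c) \<partial>M)"
    using hi by (intro nn_integral_mono) (auto simp: indicator_def intro!: ennreal_leI)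
  finally have "emeasure M B \<le> ennreal (K * c) * emeasure M T"
    using Tsets by (simp add: nn_integral_cmult_indicator)
  then have 2: "measure M B \<le> K * c * measure M T"
    using c0 K0 by (simp add: emeq ennreal_mult[symmetric])
  have mA: "0 \<le> measure M A" by simp
  have "measure M A * measure M B \<le> measure M A * (K * c * measure M T)"
    using 2 mA by (rule mult_left_mono)
  also have "\<dots> = (c / K * measure M A) * (K^2 * measure M T) "
    using K0 by (simp add: field_simps power2_eq_square)
  also have "\<dots> \<le> measure M (U ` A) * (K^2 * measure M T)"
    using 1 by (rule mult_right_mono) simp
  finally show ?thesis unfolding T_def by (simp add: algebra_simps)
qed

lemma dist:
  assumes p: "p\<in>I" and A: "A \<in> sets M" "A \<subseteq> D (r p - 1) p"
  shows "emeasure M A * emeasure M B \<le> ennreal (K^2) * emeasure M (D (r p - 1) p) * emeasure M (U ` A)"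
  using dist_real[OF assms] by (simp add: emeq ennreal_mult''[symmetric] ennreal_le_iff del: ennreal_mult'')

end


context tw begin

lemma transfer_set:
  assumes j: "1 \<le> j" and A: "A \<in> sets M" "A \<subseteq> B"
  shows "emeasure M (E k j \<inter> (U ^^ j) -` A) * emeasure M B \<le> ennreal (K^2) * emeasure M (Top (k + j)) * emeasure M A"
proof -
  define Q where "Q p \<longleftrightarrow> p \<in> I \<and> r p = k + j" for p
  define Ap where "Ap p = (if Q p then D (r p - 1) p \<inter> (U -` A \<inter> space M) else {})" for p
  define Tp where "Tp p = (if Q p then D (r p - 1) p else {})" for p
  define S where "S p = (U ^^ (j - 1)) -` Ap p \<inter> space M" for p
  have QI: "Q p \<Longrightarrow> p \<in> I" for p unfolding Q_def by simp
  have UA: "U -` A \<inter> space M \<in> sets M" using A Umeas by (simp add: measurable_sets)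
  have Ap_sets: "Ap p \<in> sets M" for p
    using QI Dsets_top UA unfolding Ap_def by auto
  have Tp_sets: "Tp p \<in> sets M" for p
    using QI Dsets_top unfolding Tp_def by auto
  have S_sets: "S p \<in> sets M" for p
    unfolding S_def using Ap_sets Upow_meas by (simp add: measurable_sets)
  have sub: "E k j \<inter> (U ^^ j) -` A \<subseteq> (\<Union>p. S p)"
  proof
    fix x assume x: "x \<in> E k j \<inter> (U ^^ j) -` A"
    then obtain p where p: "p \<in> I" "r p = k + j" "x \<in> D k p" unfolding E_def by blast
    have "(U ^^ (j - 1)) x \<in> D (k + (j - 1)) p" using p j by (intro iter) auto
    moreover have "k + (j - 1) = r p - 1" using p j by simp
    moreover have "U ((U ^^ (j - 1)) x) = (U ^^ j) x" using j
      by (metis Suc_diff_le diff_Suc_1 funpow.simps(2) o_apply)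
    moreover have "x \<in> space M" using Dsub p j by (metis add_diff_cancel_left' diff_less less_one not_less subsetD zero_less_diff le_add1 less_le_trans)
    ultimately show "x \<in> (\<Union>p. S p)"
      using x p measurable_space[OF Upow_meas[of "j - 1"]] unfolding S_def Ap_def Q_def by auto
  qed
  have "emeasure M (E k j \<inter> (U ^^ j) -` A) \<le> emeasure M (\<Union>p. S p)"
    using sub S_sets by (intro emeasure_mono) auto
  also have "\<dots> \<le> (\<Sum>p. emeasure M (S p))"
    using S_sets by (intro emeasure_subadditive_countably) auto
  also have "\<dots> = (\<Sum>p. emeasure M (Ap p))"
    unfolding S_def using pres_pow Ap_sets by simp
  finally have 1: "emeasure M (E k j \<inter> (U ^^ j) -` A) * emeasure M B \<le> (\<Sum>p. emeasure M (Ap p)) * emeasure M B"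
    by (rule mult_right_mono) simp
  have 2: "emeasure M (Ap p) * emeasure M B \<le> ennreal (K^2) * emeasure M A * emeasure M (Tp p)" for p
  proof (cases "Q p")
    case True
    then have p: "p \<in> I" unfolding Q_def by simp
    have a: "emeasure M (Ap p) * emeasure M B \<le> ennreal (K^2) * emeasure M (D (r p - 1) p) * emeasure M (U ` Ap p)"
      using True Ap_sets[of p] by (intro dist[OF p]) (auto simp: Ap_def)
    have b: "emeasure M (U ` Ap p) \<le> emeasure M A"
      using A True unfolding Ap_def by (intro emeasure_mono) auto
    have c: "ennreal (K^2) * emeasure M (D (r p - 1) p) * emeasure M (U ` Ap p) \<le> ennreal (K^2) * emeasure M (D (r p - 1) p) * emeasure M A"
      by (rule mult_left_mono[OF b]) simp
    show ?thesis using order_trans[OF a c] True unfolding Tp_def by (simp add: mult_ac)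
  next
    case False then show ?thesis unfolding Ap_def Tp_def by simp
  qed
  have "(\<Sum>p. emeasure M (Ap p)) * emeasure M B = (\<Sum>p. emeasure M (Ap p) * emeasure M B)"
    by (simp add: mult.commute)
  also have "\<dots> \<le> (\<Sum>p. ennreal (K^2) * emeasure M A * emeasure M (Tp p))"
    using 2 by (intro suminf_le) auto
  also have "\<dots> = ennreal (K^2) * emeasure M A * (\<Sum>p. emeasure M (Tp p))"
    by simp
  also have "(\<Sum>p. emeasure M (Tp p)) = emeasure M (\<Union>p. Tp p)"
  proof (rule suminf_emeasure)
    show "range Tp \<subseteq> sets M" using Tp_sets by auto
    show "disjoint_family Tp"
    proof (unfold disjoint_family_on_def, intro ballI impI)
      fix m n :: nat assume "m \<noteq> n"
      show "Tp m \<inter> Tp n = {}"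
      proof (cases "Q m \<and> Q n")
        case True
        then have "m \<in> I" "n \<in> I" "r m = r n" unfolding Q_def by auto
        then show ?thesis unfolding Tp_def using True disj[of m n "r m - 1" "r n - 1"] rpos \<open>m \<noteq> n\<close>
          by (simp add: Suc_le_eq)
      qed (auto simp: Tp_def)
    qed
  qed
  also have "(\<Union>p. Tp p) = Top (k + j)"
    unfolding Tp_def Top_def Q_def by (auto split: if_splits)
  finally show ?thesis using 1 by (simp add: algebra_simps)
qed

end


context tw begin

lemma B_pos: "0 < measure M B"
proof (rule ccontr)
  assume "\<not> 0 < measure M B"
  then have B0: "emeasure M B = 0" using measure_nonneg[of M B] by (simp add: emeq)
  define S where "S n = (U ^^ n) -` B \<inter> space M" for n
  have S_sets: "S n \<in> sets M" for n unfolding S_def using Upow_meas B_sets by (simp add: measurable_sets)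
  have "space M \<subseteq> (\<Union>n. S n)"
  proof
    fix x assume x: "x \<in> space M"
    then obtain p k where "p \<in> I" "k < r p" "x \<in> D k p" using cover_pt by blast
    then show "x \<in> (\<Union>n. S n)" using ret x unfolding S_def by blast
  qed
  then have "emeasure M (space M) \<le> emeasure M (\<Union>n. S n)"
    using S_sets by (intro emeasure_mono) auto
  also have "\<dots> \<le> (\<Sum>n. emeasure M (S n))"
    using S_sets by (intro emeasure_subadditive_countably) auto
  also have "\<dots> = 0" unfolding S_def using pres_pow[OF B_sets] B0 by simp
  finally show False using prob_space.emeasure_space_1[OF ps] by simp
qed

lemma E_D: "1 \<le> j \<Longrightarrow> x \<in> E k j \<Longrightarrow> \<exists>p\<in>I. r p = k + j \<and> k < r p \<and> x \<in> D k p"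
  unfolding E_def by auto

lemma E_into_B: assumes "1 \<le> j" "x \<in> E k j" shows "(U ^^ j) x \<in> B"
proof -
  obtain p where p: "p\<in>I" "r p = k + j" "k < r p" "x \<in> D k p" using E_D[OF assms] by blast
  then show ?thesis using ret[OF p(1,3,4)] by simp
qed

lemma E_sub: "1 \<le> j \<Longrightarrow> E k j \<subseteq> space M"
  using E_D Dsub by blast

end


context tw begin

lemma transfer_meas:
  assumes j: "1 \<le> j" and A: "A \<in> sets M"
  shows "emeasure M (E k j \<inter> (U ^^ j) -` A) \<le> ennreal (K^2 * measure M (Top (k + j)) / measure M B) * emeasure M (A \<inter> B)"
proof -
  have AB: "A \<inter> B \<in> sets M" using A B_sets by auto
  have eq: "E k j \<inter> (U ^^ j) -` A = E k j \<inter> (U ^^ j) -` (A \<inter> B)" using E_into_B[OF j] by auto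
  have Es: "E k j \<inter> (U ^^ j) -` A \<in> sets M"
  proof -
    have "E k j \<inter> (U ^^ j) -` A = E k j \<inter> ((U ^^ j) -` A \<inter> space M)" using E_sub[OF j] by auto
    then show ?thesis using E_sets[OF j] A Upow_meas by (simp add: measurable_sets sets.Int)
  qed
  have 1: "emeasure M (E k j \<inter> (U ^^ j) -` A) * emeasure M B \<le> ennreal (K^2) * emeasure M (Top (k + j)) * emeasure M (A \<inter> B)"
    unfolding eq by (rule transfer_set[OF j AB]) simp
  define x where "x = measure M (E k j \<inter> (U ^^ j) -` A)"
  define b where "b = measure M B"
  define t where "t = measure M (Top (k + j))"
  define a where "a = measure M (A \<inter> B)"
  have b0: "0 < b" using B_pos b_def by simp
  have x0: "0 \<le> x" "0 \<le> t" "0 \<le> a" unfolding x_def t_def a_def by simp_all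
  have "x * b \<le> K^2 * t * a"
    using 1 x0 b0 unfolding x_def b_def t_def a_def
    by (simp add: emeq ennreal_mult[symmetric] del: ennreal_mult'')
  then have "x \<le> K^2 * t / b * a" using b0 by (simp add: field_simps)
  then show ?thesis unfolding x_def t_def b_def a_def
    using x0 b0 unfolding t_def b_def a_def
    by (simp add: emeq ennreal_mult[symmetric] del: ennreal_mult'')
qed

lemma transfer_int:
  assumes j: "1 \<le> j" and f: "f \<in> borel_measurable M"
  shows "(\<integral>\<^sup>+x. indicator (E k j) x * f ((U ^^ j) x) \<partial>M) \<le> ennreal (K^2 * measure M (Top (k + j)) / measure M B) * (\<integral>\<^sup>+y. indicator B y * f y \<partial>M)"
proof -
  define c where "c = ennreal (K^2 * measure M (Top (k + j)) / measure M B)"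
  define N1 where "N1 = distr (density M (indicator (E k j))) M (U ^^ j)"
  define N2 where "N2 = density M (\<lambda>y. c * indicator B y)"
  have Em: "indicator (E k j) \<in> borel_measurable M" using E_sets[OF j] by simp
  have Bm: "(\<lambda>y. c * indicator B y) \<in> borel_measurable M" using B_sets by simp
  have Um': "U ^^ j \<in> density M (indicator (E k j)) \<rightarrow>\<^sub>M M" using Upow_meas by simp
  have "(\<integral>\<^sup>+x. indicator (E k j) x * f ((U ^^ j) x) \<partial>M) = (\<integral>\<^sup>+x. f ((U ^^ j) x) \<partial>density M (indicator (E k j)))"
    using Em f Upow_meas by (subst nn_integral_density) (auto intro: measurable_compose)
  also have "\<dots> = integral\<^sup>N N1 f"
    unfolding N1_def using Um' f by (subst nn_integral_distr) auto
  also have "\<dots> \<le> integral\<^sup>N N2 f"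
  proof (rule nn_integral_mono_measure)
    show sN: "sets N1 = sets N2" unfolding N1_def N2_def by simp
    show "N1 \<le> N2"
      unfolding le_measure_iff
    proof -
      have sp: "space N1 = space N2" unfolding N1_def N2_def by simp
      have "emeasure N1 A \<le> emeasure N2 A" for A
      proof (cases "A \<in> sets M")
        case True
        have "emeasure N1 A = emeasure (density M (indicator (E k j))) ((U ^^ j) -` A \<inter> space M)"
          unfolding N1_def using Um' True by (subst emeasure_distr) auto
        also have "\<dots> = emeasure M (E k j \<inter> ((U ^^ j) -` A \<inter> space M))"
          using E_sets[OF j] True Upow_meas by (subst emeasure_restricted) (auto simp: measurable_sets)
        also have "E k j \<inter> ((U ^^ j) -` A \<inter> space M) = E k j \<inter> (U ^^ j) -` A" using E_sub[OF j] by auto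
        also have "emeasure M \<dots> \<le> c * emeasure M (A \<inter> B)" unfolding c_def by (rule transfer_meas[OF j True])
        also have "\<dots> = emeasure N2 A"
          unfolding N2_def using True B_sets
          by (subst emeasure_density) (auto simp: nn_integral_cmult_indicator mult.assoc indicator_inter_arith[symmetric] Int_commute)
        finally show ?thesis .
      next
        case False
        then have "A \<notin> sets N1" unfolding N1_def by simp
        then show ?thesis by (simp add: emeasure_notin_sets)
      qed
      then show "if space N1 = space N2 then if sets N1 = sets N2 then emeasure N1 \<le> emeasure N2 else sets N1 \<subseteq> sets N2 else space N1 \<subseteq> space N2"
        using sp sN by (auto simp: le_fun_def)
    qed
  qed
  also have "\<dots> = (\<integral>\<^sup>+y. c * indicator B y * f y \<partial>M)"
    unfolding N2_def using Bm f by (subst nn_integral_density) auto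
  also have "\<dots> = c * (\<integral>\<^sup>+y. indicator B y * f y \<partial>M)"
    using B_sets f by (subst nn_integral_cmult[symmetric]) (auto simp: mult.assoc)
  finally show ?thesis unfolding c_def .
qed

end


context tw begin

definition "s lam m = (\<integral>\<^sup>+y. indicator B y * G lam m y \<partial>M)"
definition "cc h = K^2 * measure M (Top h) / measure M B"

lemma G_dec:
  assumes lam: "0 \<le> lam" and p: "p \<in> I" "k < r p" "x \<in> D k p" and jn: "r p - k \<le> n"
  shows "G lam n x = ennreal lam * G lam (n - (r p - k)) ((U ^^ (r p - k)) x)"
proof -
  define j where "j = r p - k"
  have "returns U B n x = Suc (returns U B (n - j) ((U ^^ j) x))" using returns_dec[OF p jn] j_def by simp
  moreover have "(U ^^ n) x = (U ^^ (n - j)) ((U ^^ j) x)" using funpow_split[of j n x] jn j_def by simp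
  ultimately show ?thesis unfolding G_def j_def[symmetric] using lam
    by (simp add: ennreal_mult mult.assoc)
qed

lemma G_zero:
  assumes p: "p \<in> I" "k < r p" "x \<in> D k p" and n: "1 \<le> n" "n < r p - k"
  shows "G lam n x = 0"
proof -
  have "(U ^^ n) x \<in> D (k + n) p" using p n by (intro iter) auto
  then have "(U ^^ n) x \<notin> B" using notB[OF p(1), of "k + n"] p n by auto
  then show ?thesis unfolding G_def by simp
qed

lemma step:
  assumes lam: "0 \<le> lam" and n: "1 \<le> n"
  shows "(\<integral>\<^sup>+x. indicator (Lv k) x * G lam n x \<partial>M) \<le> (\<Sum>j\<in>{1..n}. ennreal lam * ennreal (cc (k + j)) * s lam (n - j))"
proof -
  have pt: "indicator (Lv k) x * G lam n x \<le> (\<Sum>j\<in>{1..n}. indicator (E k j) x * (ennreal lam * G lam (n - j) ((U ^^ j) x)))" for x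
  proof (cases "x \<in> Lv k")
    case True
    then obtain p where p: "p \<in> I" "k < r p" "x \<in> D k p" unfolding Lv_def tower_level_def by blast
    define j0 where "j0 = r p - k"
    show ?thesis
    proof (cases "j0 \<le> n")
      case True
      have j01: "1 \<le> j0" using p j0_def by simp
      have xE: "x \<in> E k j0" unfolding E_def j0_def using p by auto
      have "indicator (Lv k) x * G lam n x = indicator (E k j0) x * (ennreal lam * G lam (n - j0) ((U ^^ j0) x))"
        using G_dec[OF lam p] True xE \<open>x \<in> Lv k\<close> unfolding j0_def by simp
      also have "\<dots> \<le> (\<Sum>j\<in>{1..n}. indicator (E k j) x * (ennreal lam * G lam (n - j) ((U ^^ j) x)))"
        using True j01 by (intro member_le_sum) auto
      finally show ?thesis .
    next
      case False
      then show ?thesis using G_zero[OF p n, of lam] unfolding j0_def by simp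
    qed
  next
    case False then show ?thesis by simp
  qed
  have meas: "(\<lambda>x. indicator (E k j) x * (ennreal lam * G lam (n - j) ((U ^^ j) x))) \<in> borel_measurable M" if "j \<in> {1..n}" for j
    using that E_sets[of j k] G_meas Upow_meas by (auto intro!: borel_measurable_times_ennreal measurable_compose[OF Upow_meas G_meas])
  have "(\<integral>\<^sup>+x. indicator (Lv k) x * G lam n x \<partial>M) \<le> (\<integral>\<^sup>+x. (\<Sum>j\<in>{1..n}. indicator (E k j) x * (ennreal lam * G lam (n - j) ((U ^^ j) x))) \<partial>M)"
    using pt by (intro nn_integral_mono) auto
  also have "\<dots> = (\<Sum>j\<in>{1..n}. \<integral>\<^sup>+x. indicator (E k j) x * (ennreal lam * G lam (n - j) ((U ^^ j) x)) \<partial>M)"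
    using meas by (intro nn_integral_sum) auto
  also have "\<dots> \<le> (\<Sum>j\<in>{1..n}. ennreal lam * ennreal (cc (k + j)) * s lam (n - j))"
  proof (intro sum_mono)
    fix j assume j: "j \<in> {1..n}"
    have m2: "(\<lambda>x. indicator (E k j) x * G lam (n - j) ((U ^^ j) x)) \<in> borel_measurable M"
      using j E_sets[of j k] by (auto intro!: borel_measurable_times_ennreal measurable_compose[OF Upow_meas G_meas])
    have "(\<integral>\<^sup>+x. indicator (E k j) x * (ennreal lam * G lam (n - j) ((U ^^ j) x)) \<partial>M)
        = ennreal lam * (\<integral>\<^sup>+x. indicator (E k j) x * G lam (n - j) ((U ^^ j) x) \<partial>M)"
      using m2 by (subst nn_integral_cmult[symmetric]) (auto simp: mult_ac)
    also have "\<dots> \<le> ennreal lam * (ennreal (cc (k + j)) * s lam (n - j))"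
      unfolding cc_def s_def using j by (intro mult_left_mono transfer_int G_meas) auto
    finally show "(\<integral>\<^sup>+x. indicator (E k j) x * (ennreal lam * G lam (n - j) ((U ^^ j) x)) \<partial>M) \<le> ennreal lam * ennreal (cc (k + j)) * s lam (n - j)"
      by (simp add: mult.assoc)
  qed
  finally show ?thesis .
qed

end



lemma geo_sum:
  fixes a t :: real
  shows "(t - a) * (\<Sum>j\<in>{1..n}. a ^ (j - 1) * t ^ (n - j)) = t ^ n - a ^ n"
proof (induction n)
  case 0 then show ?case by simp
next
  case (Suc n)
  have "(\<Sum>j\<in>{1..Suc n}. a ^ (j - 1) * t ^ (Suc n - j)) = (\<Sum>j\<in>{1..n}. a ^ (j - 1) * t ^ (Suc n - j)) + a ^ n"
    by simp
  also have "(\<Sum>j\<in>{1..n}. a ^ (j - 1) * t ^ (Suc n - j)) = t * (\<Sum>j\<in>{1..n}. a ^ (j - 1) * t ^ (n - j))"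
    unfolding sum_distrib_left by (intro sum.cong) (auto simp: Suc_diff_le)
  finally have eq: "(\<Sum>j\<in>{1..Suc n}. a ^ (j - 1) * t ^ (Suc n - j)) = t * (\<Sum>j\<in>{1..n}. a ^ (j - 1) * t ^ (n - j)) + a ^ n" .
  define S where "S = (\<Sum>j\<in>{1..n}. a ^ (j - 1) * t ^ (n - j))"
  have "(t - a) * (t * S + a ^ n) = t * ((t - a) * S) + (t - a) * a ^ n" by (simp add: algebra_simps)
  also have "\<dots> = t * (t ^ n - a ^ n) + (t - a) * a ^ n" using Suc.IH unfolding S_def by simp
  also have "\<dots> = t ^ Suc n - a ^ Suc n" by (simp add: algebra_simps)
  finally show ?case using eq S_def by simp
qed

lemma geo_le:
  fixes a t :: real
  assumes "0 \<le> a" "a < t"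
  shows "(\<Sum>j\<in>{1..n}. a ^ (j - 1) * t ^ (n - j)) \<le> t ^ n / (t - a)"
proof -
  have "(t - a) * (\<Sum>j\<in>{1..n}. a ^ (j - 1) * t ^ (n - j)) \<le> t ^ n" using geo_sum[of t a n] assms by simp
  then show ?thesis using assms by (simp add: field_simps)
qed

locale tw2 = tw +
  fixes C0 \<rho> :: real
  assumes tail: "\<And>n. measure M (tower_level I r D n) \<le> C0 * \<rho> ^ n"
begin

lemma C0_pos: "0 < C0"
  using tail[of 0] B_pos B_eq Lv_def by simp

lemma rho_nonneg: "0 \<le> \<rho>"
proof -
  have "0 \<le> C0 * \<rho>" using order_trans[OF measure_nonneg tail[of 1]] by simp
  then show ?thesis using C0_pos by (simp add: zero_le_mult_iff)
qed

definition "L = K^2 * C0 / measure M B"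

lemma L_pos: "0 < L" unfolding L_def using C0_pos B_pos Kge by simp

lemma cc_le: "1 \<le> h \<Longrightarrow> cc h \<le> L * \<rho> ^ (h - 1)"
proof -
  assume h: "1 \<le> h"
  have "measure M (Top h) \<le> measure M (Lv (h - 1))"
    using Top_sub Lv_sets fin by (intro finite_measure.finite_measure_mono) auto
  also have "\<dots> \<le> C0 * \<rho> ^ (h - 1)" using tail unfolding Lv_def by simp
  finally show ?thesis unfolding cc_def L_def using B_pos Kge
    by (simp add: divide_right_mono mult_left_mono mult.assoc)
qed

lemma s0: "s lam 0 = emeasure M B"
proof -
  have "s lam 0 = (\<integral>\<^sup>+y. indicator B y \<partial>M)"
    unfolding s_def G_def returns_def by (intro nn_integral_cong) (auto simp: indicator_def)
  then show ?thesis using B_sets by simp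
qed

lemma s_bound:
  assumes lam: "0 \<le> lam" and th: "\<rho> < \<theta>" and lL: "lam * L \<le> \<theta> - \<rho>"
  shows "s lam n \<le> ennreal (measure M B * \<theta> ^ n)"
proof (induction n rule: less_induct)
  case (less n)
  have th0: "0 < \<theta>" using th rho_nonneg by simp
  show ?case
  proof (cases "n = 0")
    case True then show ?thesis using s0 by (simp add: emeq)
  next
    case False
    then have n1: "1 \<le> n" by simp
    have "s lam n = (\<integral>\<^sup>+x. indicator (Lv 0) x * G lam n x \<partial>M)" unfolding s_def B_eq ..
    also have "\<dots> \<le> (\<Sum>j\<in>{1..n}. ennreal lam * ennreal (cc (0 + j)) * s lam (n - j))"
      by (rule step[OF lam n1])
    also have "\<dots> \<le> (\<Sum>j\<in>{1..n}. ennreal (lam * (L * \<rho> ^ (j - 1)) * (measure M B * \<theta> ^ (n - j))))"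
    proof (intro sum_mono)
      fix j assume j: "j \<in> {1..n}"
      have "ennreal (cc (0 + j)) \<le> ennreal (L * \<rho> ^ (j - 1))" using cc_le[of j] j by (simp add: ennreal_leI)
      moreover have "s lam (n - j) \<le> ennreal (measure M B * \<theta> ^ (n - j))" using less j by simp
      ultimately have "ennreal lam * ennreal (cc (0 + j)) * s lam (n - j) \<le> ennreal lam * ennreal (L * \<rho> ^ (j - 1)) * ennreal (measure M B * \<theta> ^ (n - j))"
        by (intro mult_mono) auto
      then show "ennreal lam * ennreal (cc (0 + j)) * s lam (n - j) \<le> ennreal (lam * (L * \<rho> ^ (j - 1)) * (measure M B * \<theta> ^ (n - j)))"
        using lam L_pos rho_nonneg th0 by (simp add: ennreal_mult)
    qed
    also have "\<dots> = ennreal (\<Sum>j\<in>{1..n}. lam * (L * \<rho> ^ (j - 1)) * (measure M B * \<theta> ^ (n - j)))"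
      using lam L_pos rho_nonneg th0 by (intro sum_ennreal) auto
    also have "\<dots> \<le> ennreal (measure M B * \<theta> ^ n)"
    proof (intro ennreal_leI)
      have "(\<Sum>j\<in>{1..n}. lam * (L * \<rho> ^ (j - 1)) * (measure M B * \<theta> ^ (n - j)))
          = lam * L * measure M B * (\<Sum>j\<in>{1..n}. \<rho> ^ (j - 1) * \<theta> ^ (n - j))"
        by (simp add: sum_distrib_left mult_ac)
      also have "\<dots> \<le> lam * L * measure M B * (\<theta> ^ n / (\<theta> - \<rho>))"
        using geo_le[OF rho_nonneg th, of n] lam L_pos by (intro mult_left_mono) auto
      also have "\<dots> = (lam * L) / (\<theta> - \<rho>) * (measure M B * \<theta> ^ n)"
        by (simp add: field_simps)
      also have "\<dots> \<le> 1 * (measure M B * \<theta> ^ n)"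
        using lL th th0 lam L_pos by (intro mult_right_mono) (auto simp: field_simps)
      finally show "(\<Sum>j\<in>{1..n}. lam * (L * \<rho> ^ (j - 1)) * (measure M B * \<theta> ^ (n - j))) \<le> measure M B * \<theta> ^ n"
        by simp
    qed
    finally show ?thesis .
  qed
qed

end



lemma split_real:
  fixes tau eta nu :: real
  assumes "0 \<le> tau" "0 \<le> eta" "eta \<le> 1" "tau \<le> eta ^ N" "0 < nu" "nu \<le> 1"
  shows "tau ^ m \<le> eta ^ n + (1 / nu) ^ n * (nu ^ N) ^ m"
proof (cases "n \<le> N * m")
  case True
  have "tau ^ m \<le> (eta ^ N) ^ m" using assms by (intro power_mono) auto
  also have "\<dots> = eta ^ (N * m)" by (simp add: power_mult)
  also have "\<dots> \<le> eta ^ n" using assms True by (intro power_decreasing) auto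
  finally show ?thesis using assms by (simp add: add_increasing2)
next
  case False
  have "nu ^ n \<le> nu ^ (N * m)" using assms False by (intro power_decreasing) auto
  then have "1 \<le> (1 / nu) ^ n * (nu ^ N) ^ m" using assms
    by (simp add: power_mult[symmetric] field_simps power_divide)
  moreover have "tau ^ m \<le> 1"
  proof -
    have "eta ^ N \<le> 1" using assms by (simp add: power_le_one)
    then show ?thesis using assms by (intro power_le_one) auto
  qed
  ultimately show ?thesis using assms by (simp add: add_increasing)
qed

context tw2 begin

lemma s_split:
  assumes "0 \<le> tau" "0 \<le> eta" "eta \<le> 1" "tau \<le> eta ^ N" "0 < nu" "nu \<le> 1"
  shows "s tau n \<le> ennreal (eta ^ n) * emeasure M B + ennreal ((1 / nu) ^ n) * s (nu ^ N) n"
proof -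
  have pt: "indicator B y * G tau n y \<le> ennreal (eta ^ n) * indicator B y + ennreal ((1 / nu) ^ n) * (indicator B y * G (nu ^ N) n y)" for y
  proof -
    define m where "m = returns U B n y"
    have "ennreal (tau ^ m) \<le> ennreal (eta ^ n + (1 / nu) ^ n * (nu ^ N) ^ m)"
      using split_real[OF assms] by (intro ennreal_leI) auto
    also have "\<dots> = ennreal (eta ^ n) + ennreal ((1 / nu) ^ n) * ennreal ((nu ^ N) ^ m)"
      using assms by (simp add: ennreal_plus[symmetric] ennreal_mult[symmetric] del: ennreal_plus)
    finally have "ennreal (tau ^ m) \<le> ennreal (eta ^ n) + ennreal ((1 / nu) ^ n) * ennreal ((nu ^ N) ^ m)" .
    then show ?thesis unfolding G_def m_def[symmetric] by (auto simp: indicator_def)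
  qed
  have mh: "(\<lambda>y. indicator B y * G (nu ^ N) n y) \<in> borel_measurable M" using B_sets G_meas by auto
  have "s tau n \<le> (\<integral>\<^sup>+y. ennreal (eta ^ n) * indicator B y + ennreal ((1 / nu) ^ n) * (indicator B y * G (nu ^ N) n y) \<partial>M)"
    unfolding s_def using pt by (intro nn_integral_mono) auto
  also have "\<dots> = ennreal (eta ^ n) * emeasure M B + ennreal ((1 / nu) ^ n) * s (nu ^ N) n"
    using B_sets mh unfolding s_def
    by (subst nn_integral_add) (auto simp: nn_integral_cmult nn_integral_cmult_indicator)
  finally show ?thesis .
qed

end


context tw2 begin

lemma s_tau:
  assumes tau: "0 \<le> tau" "tau < 1" and rho1: "\<rho> < 1"
  shows "\<exists>\<theta>. \<rho> < \<theta> \<and> \<theta> < 1 \<and> (\<forall>n. s tau n \<le> ennreal (2 * measure M B * \<theta> ^ n))"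
proof -
  define t0 where "t0 = (1 + \<rho>) / 2"
  define nu where "nu = (1 + t0) / 2"
  define l0 where "l0 = min 1 ((t0 - \<rho>) / L)"
  have t0: "\<rho> < t0" "t0 < 1" using rho1 t0_def by auto
  have nu: "t0 < nu" "nu < 1" "0 < nu" using t0 nu_def rho_nonneg by auto
  have l0: "0 < l0" "l0 \<le> 1" "l0 * L \<le> t0 - \<rho>" using t0 L_pos unfolding l0_def
    by (auto simp: min_def field_simps)
  obtain N0 where N0: "nu ^ N0 < l0" using real_arch_pow_inv[OF l0(1) nu(2)] by blast
  define N where "N = Suc N0"
  have nuN: "nu ^ N \<le> l0" using N0 nu unfolding N_def
    by (meson less_imp_le order_trans power_decreasing le_SucI order_refl)
  define eta where "eta = root N tau"
  have N0': "0 < N" unfolding N_def by simp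
  have eta: "0 \<le> eta" "eta < 1" "eta ^ N = tau" using tau N0' unfolding eta_def
    by (auto simp: real_root_ge_zero simp del: power_Suc)
  define th where "th = max (max eta (t0 / nu)) t0"
  have th: "\<rho> < th" "th < 1" "0 \<le> eta" "eta \<le> th" "t0 / nu \<le> th" "t0 \<le> th"
    using t0 nu eta unfolding th_def by auto
  have sb: "s (nu ^ N) n \<le> ennreal (measure M B * t0 ^ n)" for n
  proof (rule s_bound)
    show "0 \<le> nu ^ N" using nu by simp
    show "\<rho> < t0" by fact
    show "nu ^ N * L \<le> t0 - \<rho>" using nuN l0 L_pos by (meson mult_right_mono less_imp_le order_trans)
  qed
  have "s tau n \<le> ennreal (2 * measure M B * th ^ n)" for n
  proof -
    have "s tau n \<le> ennreal (eta ^ n) * emeasure M B + ennreal ((1 / nu) ^ n) * s (nu ^ N) n"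
      using tau eta nu by (intro s_split) auto
    also have "\<dots> \<le> ennreal (eta ^ n) * ennreal (measure M B) + ennreal ((1 / nu) ^ n) * ennreal (measure M B * t0 ^ n)"
      using sb by (intro add_mono mult_left_mono) (auto simp: emeq)
    also have "\<dots> = ennreal (eta ^ n * measure M B + (1 / nu) ^ n * (measure M B * t0 ^ n))"
      using eta nu t0 rho_nonneg by (simp add: ennreal_plus[symmetric] ennreal_mult[symmetric] del: ennreal_plus)
    also have "\<dots> \<le> ennreal (2 * measure M B * th ^ n)"
    proof (intro ennreal_leI)
      have "eta ^ n \<le> th ^ n" using th by (intro power_mono) auto
      moreover have "(1 / nu) ^ n * t0 ^ n = (t0 / nu) ^ n" by (simp add: power_divide)
      moreover have "(t0 / nu) ^ n \<le> th ^ n" using th t0 nu rho_nonneg by (intro power_mono) auto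
      ultimately have "eta ^ n + (1 / nu) ^ n * t0 ^ n \<le> 2 * th ^ n" by simp
      then have "(eta ^ n + (1 / nu) ^ n * t0 ^ n) * measure M B \<le> (2 * th ^ n) * measure M B"
        using B_pos by (intro mult_right_mono) auto
      then show "eta ^ n * measure M B + (1 / nu) ^ n * (measure M B * t0 ^ n) \<le> 2 * measure M B * th ^ n"
        by (simp add: algebra_simps)
    qed
    finally show ?thesis .
  qed
  then show ?thesis using th by blast
qed

end


context tw2 begin

lemma per_k:
  assumes tau: "0 \<le> tau" "tau \<le> 1" and th: "\<rho> < \<theta>" and sb: "\<And>m. s tau m \<le> ennreal (2 * measure M B * \<theta> ^ m)"
    and n: "1 \<le> n" and ep: "0 \<le> ep"
  shows "ennreal (exp (ep * real k)) * (\<integral>\<^sup>+x. indicator (Lv k) x * G tau n x \<partial>M)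
     \<le> ennreal ((exp ep * \<rho>) ^ k * (2 * K^2 * C0 / (\<theta> - \<rho>) * \<theta> ^ n))"
proof -
  have th0: "0 < \<theta>" using th rho_nonneg by simp
  have "(\<integral>\<^sup>+x. indicator (Lv k) x * G tau n x \<partial>M) \<le> (\<Sum>j\<in>{1..n}. ennreal tau * ennreal (cc (k + j)) * s tau (n - j))"
    by (rule step[OF tau(1) n])
  also have "\<dots> \<le> (\<Sum>j\<in>{1..n}. ennreal (tau * (L * \<rho> ^ (k + j - 1)) * (2 * measure M B * \<theta> ^ (n - j))))"
  proof (intro sum_mono)
    fix j assume j: "j \<in> {1..n}"
    have "ennreal (cc (k + j)) \<le> ennreal (L * \<rho> ^ (k + j - 1))" using cc_le[of "k + j"] j by (simp add: ennreal_leI)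
    then have "ennreal tau * ennreal (cc (k + j)) * s tau (n - j) \<le> ennreal tau * ennreal (L * \<rho> ^ (k + j - 1)) * ennreal (2 * measure M B * \<theta> ^ (n - j))"
      using sb by (intro mult_mono) auto
    then show "ennreal tau * ennreal (cc (k + j)) * s tau (n - j) \<le> ennreal (tau * (L * \<rho> ^ (k + j - 1)) * (2 * measure M B * \<theta> ^ (n - j)))"
      using tau L_pos rho_nonneg th0 by (simp add: ennreal_mult)
  qed
  also have "\<dots> = ennreal (\<Sum>j\<in>{1..n}. tau * (L * \<rho> ^ (k + j - 1)) * (2 * measure M B * \<theta> ^ (n - j)))"
    using tau L_pos rho_nonneg th0 by (intro sum_ennreal) auto
  finally have 1: "(\<integral>\<^sup>+x. indicator (Lv k) x * G tau n x \<partial>M) \<le> ennreal (\<Sum>j\<in>{1..n}. tau * (L * \<rho> ^ (k + j - 1)) * (2 * measure M B * \<theta> ^ (n - j)))" .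
  have "(\<Sum>j\<in>{1..n}. tau * (L * \<rho> ^ (k + j - 1)) * (2 * measure M B * \<theta> ^ (n - j)))
      = tau * (2 * (L * measure M B)) * \<rho> ^ k * (\<Sum>j\<in>{1..n}. \<rho> ^ (j - 1) * \<theta> ^ (n - j))"
    unfolding sum_distrib_left
  proof (intro sum.cong refl)
    fix j assume "j \<in> {1..n}"
    then have "\<rho> ^ (k + j - 1) = \<rho> ^ k * \<rho> ^ (j - 1)" by (simp add: power_add[symmetric])
    then show "tau * (L * \<rho> ^ (k + j - 1)) * (2 * measure M B * \<theta> ^ (n - j)) = tau * (2 * (L * measure M B)) * \<rho> ^ k * (\<rho> ^ (j - 1) * \<theta> ^ (n - j))"
      by (simp add: mult_ac)
  qed
  also have "L * measure M B = K^2 * C0" unfolding L_def using B_pos by simp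
  also have "tau * (2 * (K^2 * C0)) * \<rho> ^ k * (\<Sum>j\<in>{1..n}. \<rho> ^ (j - 1) * \<theta> ^ (n - j)) \<le> 1 * (2 * (K^2 * C0)) * \<rho> ^ k * (\<theta> ^ n / (\<theta> - \<rho>))"
    using tau C0_pos rho_nonneg geo_le[OF rho_nonneg th, of n] th0
    by (intro mult_mono) (auto intro!: sum_nonneg)
  finally have 2: "(\<Sum>j\<in>{1..n}. tau * (L * \<rho> ^ (k + j - 1)) * (2 * measure M B * \<theta> ^ (n - j))) \<le> 2 * K^2 * C0 * \<rho> ^ k * (\<theta> ^ n / (\<theta> - \<rho>))"
    by (simp add: mult_ac)
  have "ennreal (exp (ep * real k)) * (\<integral>\<^sup>+x. indicator (Lv k) x * G tau n x \<partial>M)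
      \<le> ennreal (exp (ep * real k)) * ennreal (2 * K^2 * C0 * \<rho> ^ k * (\<theta> ^ n / (\<theta> - \<rho>)))"
    using order_trans[OF 1 ennreal_leI[OF 2]] by (intro mult_left_mono) auto
  also have "\<dots> = ennreal (exp (ep * real k) * (2 * K^2 * C0 * \<rho> ^ k * (\<theta> ^ n / (\<theta> - \<rho>))))"
    using ennreal_mult[of "exp (ep * real k)" "2 * K^2 * C0 * \<rho> ^ k * (\<theta> ^ n / (\<theta> - \<rho>))"] C0_pos rho_nonneg th th0
    by (simp del: ennreal_mult'' add: ennreal_mult'' [symmetric])
  also have ek: "exp (ep * real k) = exp ep ^ k" by (simp add: exp_of_nat_mult[symmetric] mult.commute)
  have "exp (ep * real k) * (2 * K^2 * C0 * \<rho> ^ k * (\<theta> ^ n / (\<theta> - \<rho>))) = (exp ep * \<rho>) ^ k * (2 * K^2 * C0 / (\<theta> - \<rho>) * \<theta> ^ n)"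
    unfolding ek by (simp add: power_mult_distrib field_simps)
  finally show ?thesis .
qed

end


context tw2 begin

lemma final:
  assumes rho1: "\<rho> < 1" and tau: "0 \<le> \<tau>" "\<tau> < 1" and ep: "0 < \<epsilon>" and q1: "exp \<epsilon> * \<rho> < 1"
  shows "\<exists>C>0. \<exists>\<theta><1. \<forall>n::nat.
    (\<integral>\<^sup>+x\<in>{x \<in> space M. (U ^^ n) x \<in> tower_base I D}.
        ennreal (\<tau> ^ returns U (tower_base I D) n x * exp (\<epsilon> * real (tower_height I r D x))) \<partial>M)
      \<le> ennreal (C * \<theta> ^ n)"
proof -
  obtain \<theta> where th: "\<rho> < \<theta>" "\<theta> < 1" and sb: "\<And>m. s \<tau> m \<le> ennreal (2 * measure M B * \<theta> ^ m)"
    using s_tau[OF tau rho1] by blast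
  define q where "q = exp \<epsilon> * \<rho>"
  have q: "0 \<le> q" "q < 1" using q1 rho_nonneg unfolding q_def by auto
  define Z where "Z = 2 * K^2 * C0 / (\<theta> - \<rho>)"
  have Z: "0 \<le> Z" using th C0_pos unfolding Z_def by simp
  define C where "C = max (Z / (1 - q)) 1"
  have C: "0 < C" "1 \<le> C" "Z / (1 - q) \<le> C" unfolding C_def by auto
  have th0: "0 < \<theta>" using th rho_nonneg by simp
  have bound: "(\<integral>\<^sup>+x\<in>{x \<in> space M. (U ^^ n) x \<in> B}.
        ennreal (\<tau> ^ returns U B n x * exp (\<epsilon> * real (tower_height I r D x))) \<partial>M)
      \<le> ennreal (C * \<theta> ^ n)" for n
  proof (cases "n = 0")
    case True
    have "(\<integral>\<^sup>+x\<in>{x \<in> space M. (U ^^ n) x \<in> B}.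
        ennreal (\<tau> ^ returns U B n x * exp (\<epsilon> * real (tower_height I r D x))) \<partial>M)
        \<le> (\<integral>\<^sup>+x. indicator B x \<partial>M)"
    proof (intro nn_integral_mono)
      fix x assume x: "x \<in> space M"
      show "ennreal (\<tau> ^ returns U B n x * exp (\<epsilon> * real (tower_height I r D x))) * indicator {x \<in> space M. (U ^^ n) x \<in> B} x \<le> indicator B x"
      proof (cases "x \<in> B")
        case True
        then obtain p where p: "p \<in> I" "x \<in> D 0 p" unfolding tower_base_def by blast
        then have "tower_height I r D x = 0" using height[OF p(1) _ p(2)] rpos[OF p(1)] by simp
        then show ?thesis using \<open>n = 0\<close> True by (simp add: returns_def indicator_def)
      qed (simp add: \<open>n = 0\<close> indicator_def)
    qed
    also have "\<dots> = emeasure M B" using B_sets by simp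
    also have "\<dots> \<le> 1" using prob_space.emeasure_le_1[OF ps] by simp
    also have "\<dots> \<le> ennreal (C * \<theta> ^ n)" using True C by simp
    finally show ?thesis .
  next
    case False
    then have n1: "1 \<le> n" by simp
    define F where "F k x = ennreal (exp (\<epsilon> * real k)) * (indicator (Lv k) x * G \<tau> n x)" for k x
    have Fm: "F k \<in> borel_measurable M" for k unfolding F_def using Lv_sets G_meas by auto
    have "(\<integral>\<^sup>+x\<in>{x \<in> space M. (U ^^ n) x \<in> B}.
        ennreal (\<tau> ^ returns U B n x * exp (\<epsilon> * real (tower_height I r D x))) \<partial>M)
        \<le> (\<integral>\<^sup>+x. (\<Sum>k. F k x) \<partial>M)"
    proof (intro nn_integral_mono)
      fix x assume x: "x \<in> space M"
      then obtain p k where p: "p \<in> I" "k < r p" "x \<in> D k p" using cover_pt by blast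
      have hk: "tower_height I r D x = k" by (rule height[OF p])
      have xL: "x \<in> Lv k" unfolding Lv_def tower_level_def using p by blast
      have "ennreal (\<tau> ^ returns U B n x * exp (\<epsilon> * real (tower_height I r D x))) * indicator {x \<in> space M. (U ^^ n) x \<in> B} x = F k x"
        unfolding F_def G_def hk using x xL tau by (simp add: indicator_def ennreal_mult mult_ac)
      also have "\<dots> = (\<Sum>k'\<in>{k}. F k' x)" by simp
      also have "\<dots> \<le> (\<Sum>k. F k x)" by (intro sum_le_suminf) auto
      finally show "ennreal (\<tau> ^ returns U B n x * exp (\<epsilon> * real (tower_height I r D x))) * indicator {x \<in> space M. (U ^^ n) x \<in> B} x \<le> (\<Sum>k. F k x)" .
    qed
    also have "\<dots> = (\<Sum>k. integral\<^sup>N M (F k))" using Fm by (intro nn_integral_suminf) auto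
    also have "\<dots> \<le> (\<Sum>k. ennreal (q ^ k * (Z * \<theta> ^ n)))"
    proof (intro suminf_le)
      fix k
      have "integral\<^sup>N M (F k) = ennreal (exp (\<epsilon> * real k)) * (\<integral>\<^sup>+x. indicator (Lv k) x * G \<tau> n x \<partial>M)"
        unfolding F_def using Lv_sets G_meas by (intro nn_integral_cmult) auto
      also have "\<dots> \<le> ennreal (q ^ k * (Z * \<theta> ^ n))"
        unfolding q_def Z_def using per_k[OF tau(1) _ th(1) sb n1, of \<epsilon> k] tau ep by simp
      finally show "integral\<^sup>N M (F k) \<le> ennreal (q ^ k * (Z * \<theta> ^ n))" .
    qed auto
    also have "\<dots> = ennreal (\<Sum>k. q ^ k * (Z * \<theta> ^ n))"
      using q Z th0 by (intro suminf_ennreal2) (auto intro: summable_mult2)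
    also have "(\<Sum>k. q ^ k * (Z * \<theta> ^ n)) = Z / (1 - q) * \<theta> ^ n"
      using q by (subst suminf_mult2[symmetric]) (auto simp: suminf_geometric)
    also have "ennreal (Z / (1 - q) * \<theta> ^ n) \<le> ennreal (C * \<theta> ^ n)"
      using C th0 by (intro ennreal_leI mult_right_mono) auto
    finally show ?thesis .
  qed
  then show ?thesis using C th by blast
qed

end


theorem mainTheorem11:
  fixes M :: "'a measure" and U :: "'a \<Rightarrow> 'a" and I :: "nat set"
    and r :: "nat \<Rightarrow> nat" and D :: "nat \<Rightarrow> nat \<Rightarrow> 'a set"
    and C0 \<rho> \<tau> \<epsilon> :: real
  assumes tower: "expanding_young_tower M U I r D"
    and tail: "\<forall>n. measure M (tower_level I r D n) \<le> C0 * \<rho> ^ n"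
    and "\<rho> < 1"
    and "0 \<le> \<tau>" and "\<tau> < 1"
    and "0 < \<epsilon>" and "exp \<epsilon> * \<rho> < 1"
  shows "\<exists>C>0. \<exists>\<theta><1. \<forall>n::nat.
    (\<integral>\<^sup>+x\<in>{x \<in> space M. (U ^^ n) x \<in> tower_base I D}.
        ennreal (\<tau> ^ returns U (tower_base I D) n x * exp (\<epsilon> * real (tower_height I r D x))) \<partial>M)
      \<le> ennreal (C * \<theta> ^ n)"
proof -
  note T = tower[unfolded expanding_young_tower_def]
  have ex1: "\<exists>J :: 'a \<Rightarrow> real.
        J \<in> borel_measurable M \<and> (\<forall>x\<in>space M. 0 < J x) \<and>
        (\<forall>p\<in>I. \<forall>k<r p. \<forall>A. A \<in> sets M \<and> A \<subseteq> D k p \<longrightarrow>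
            emeasure M (U ` A) = (\<integral>\<^sup>+x\<in>A. ennreal (1 / J x) \<partial>M)) \<and>
        (\<exists>C \<beta> :: real. 0 < \<beta> \<and> \<beta> < 1 \<and>
           (\<forall>x\<in>space M. \<forall>y\<in>space M. same_elt I r D x y \<longrightarrow>
              (case sep_time I r D U (U x) (U y) of
                 enat m \<Rightarrow> \<bar>1 - J x / J y\<bar> \<le> C * \<beta> ^ m
               | \<infinity> \<Rightarrow> J x = J y)))"
    using T by (elim conjE) assumption
  from ex1 show ?thesis
  proof (elim exE conjE)
  fix J :: "'a \<Rightarrow> real" and Cd \<beta> :: real
  assume Jm: "J \<in> borel_measurable M" and Jp: "\<forall>x\<in>space M. 0 < J x"
    and jac: "\<forall>p\<in>I. \<forall>k<r p. \<forall>A. A \<in> sets M \<and> A \<subseteq> D k p \<longrightarrow>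
            emeasure M (U ` A) = (\<integral>\<^sup>+x\<in>A. ennreal (1 / J x) \<partial>M)"
    and b1: "0 < \<beta>" and b2: "\<beta> < 1"
    and dis: "\<forall>x\<in>space M. \<forall>y\<in>space M. same_elt I r D x y \<longrightarrow>
              (case sep_time I r D U (U x) (U y) of
                 enat m \<Rightarrow> \<bar>1 - J x / J y\<bar> \<le> Cd * \<beta> ^ m
               | \<infinity> \<Rightarrow> J x = J y)"
  have b: "0 < \<beta>" "\<beta> < 1" using b1 b2 by auto
  define K where "K = 1 + \<bar>Cd\<bar>"
  have Kge: "1 \<le> K" unfolding K_def by simp
  have Kratio: "J x \<le> K * J y" if x: "x \<in> space M" and y: "y \<in> space M" and se: "same_elt I r D x y" for x y
  proof -
    have Jy: "0 < J y" using Jp y by auto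
    show ?thesis
    proof (cases "sep_time I r D U (U x) (U y)")
      case (enat m)
      then have "\<bar>1 - J x / J y\<bar> \<le> Cd * \<beta> ^ m" using dis x y se by force
      moreover have "Cd * \<beta> ^ m \<le> \<bar>Cd\<bar>"
      proof -
        have "\<beta> ^ m \<le> 1" using b by (simp add: power_le_one)
        moreover have "0 \<le> \<beta> ^ m" using b by simp
        ultimately have "\<bar>Cd\<bar> * \<beta> ^ m \<le> \<bar>Cd\<bar>" by (simp add: mult_left_le)
        moreover have "Cd * \<beta> ^ m \<le> \<bar>Cd\<bar> * \<beta> ^ m" using b by (intro mult_right_mono) auto
        ultimately show ?thesis by linarith
      qed
      ultimately have "J x / J y \<le> K" unfolding K_def by linarith
      then show ?thesis using Jy by (simp add: divide_le_eq mult.commute)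
    next
      case infinity
      then have "J x = J y" using dis x y se by force
      then show ?thesis using Jy Kge by simp
    qed
  qed
  have c1: "prob_space M" using T by (elim conjE) assumption
  have c2: "U \<in> M \<rightarrow>\<^sub>M M" using T by (elim conjE) assumption
  have c3: "distr M M U = M" using T by (elim conjE) assumption
  have c4: "\<forall>p\<in>I. 1 \<le> r p" using T by (elim conjE) assumption
  have c5: "\<forall>p\<in>I. \<forall>k<r p. D k p \<in> sets M" using T by (elim conjE) assumption
  have c6: "\<forall>p\<in>I. \<forall>q\<in>I. \<forall>k<r p. \<forall>l<r q. (k, p) \<noteq> (l, q) \<longrightarrow> D k p \<inter> D l q = {}" using T by (elim conjE) assumption
  have c7: "(\<Union>p\<in>I. \<Union>k\<in>{..<r p}. D k p) = space M" using T by (elim conjE) assumption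
  have c8: "\<forall>p\<in>I. \<forall>k. Suc k < r p \<longrightarrow> bij_betw U (D k p) (D (Suc k) p)" using T by (elim conjE) assumption
  have c9: "\<forall>p\<in>I. bij_betw U (D (r p - 1) p) (tower_base I D)" using T by (elim conjE) assumption
  have c10: "\<forall>p\<in>I. \<forall>k<r p. \<forall>A. A \<in> sets M \<and> A \<subseteq> D k p \<longrightarrow> U ` A \<in> sets M" using T by (elim conjE) assumption
  have twI: "tw M U I r D J K"
  proof (rule tw.intro)
    show "prob_space M" by (rule c1)
    show "U \<in> M \<rightarrow>\<^sub>M M" by (rule c2)
    show "distr M M U = M" by (rule c3)
    show "\<And>p. p\<in>I \<Longrightarrow> 1 \<le> r p" using c4 by blast
    show "\<And>p k. p\<in>I \<Longrightarrow> k<r p \<Longrightarrow> D k p \<in> sets M" using c5 by blast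
    show "\<And>p q k l. p\<in>I \<Longrightarrow> q\<in>I \<Longrightarrow> k<r p \<Longrightarrow> l<r q \<Longrightarrow> (k, p) \<noteq> (l, q) \<Longrightarrow> D k p \<inter> D l q = {}"
      using c6 by blast
    show "(\<Union>p\<in>I. \<Union>k\<in>{..<r p}. D k p) = space M" by (rule c7)
    show "\<And>p k. p\<in>I \<Longrightarrow> Suc k < r p \<Longrightarrow> bij_betw U (D k p) (D (Suc k) p)" using c8 by blast
    show "\<And>p. p\<in>I \<Longrightarrow> bij_betw U (D (r p - 1) p) (tower_base I D)" using c9 by blast
    show "\<And>p k A. p\<in>I \<Longrightarrow> k<r p \<Longrightarrow> A \<in> sets M \<Longrightarrow> A \<subseteq> D k p \<Longrightarrow> U ` A \<in> sets M" using c10 by blast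
    show "J \<in> borel_measurable M" by (rule Jm)
    show "\<And>x. x\<in>space M \<Longrightarrow> 0 < J x" using Jp by blast
    show "\<And>p k A. p\<in>I \<Longrightarrow> k<r p \<Longrightarrow> A \<in> sets M \<Longrightarrow> A \<subseteq> D k p \<Longrightarrow>
            emeasure M (U ` A) = (\<integral>\<^sup>+x\<in>A. ennreal (1 / J x) \<partial>M)" using jac by blast
    show "1 \<le> K" by (rule Kge)
    show "\<And>x y. x\<in>space M \<Longrightarrow> y\<in>space M \<Longrightarrow> same_elt I r D x y \<Longrightarrow> J x \<le> K * J y" by (rule Kratio)
  qed
  interpret tw2 M U I r D J K C0 \<rho>
  proof (rule tw2.intro[OF twI], rule tw2_axioms.intro)
    show "\<And>n. measure M (tower_level I r D n) \<le> C0 * \<rho> ^ n" using tail by blast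
  qed
  show ?thesis by (rule final) fact+
  qed
qed

end
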